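(* Let $0<a\le 1$. For every $\epsilon>0$ there is $c_1\in(\tfrac12,1)$ such that, for the two-phase marking scheme with parameter $c_1$ run alongside the biased random transpositions walk on $N$ cards, the first time $T_N$ at which all $N$ cards are marked satisfies $$P\Big(T_N>(1+\epsilon)\frac{1}{2a}N\log N\Big)=o(1)\quad\text{as }N\to\infty .$$
   Context: Biased random transpositions walk: $N=2n$ cards; $n$ are $a$-cards with weight $p(c)=a$ and $n$ are $b$-cards with weight $p(c)=b$, where $0<a\le1$, $b=2-a$. At each step $t$ two cards $R_t,L_t$ are chosen independently, each equal to card $c$ with probability $p(c)/N$, and their positions are exchanged (nothing if $R_t=L_t$). Two-phase marking scheme with parameter $c_1\in(\tfrac12,1)$, using auxiliary independent randomness; initially no card is marked; let $k$ be the number of marked cards at the start of step $t$. Phase 1 ($k<c_1N$): if $R_t$ and $L_t$ are both unmarked, mark $R_t$ with probability $\frac{a^2}{p(R_t)p(L_t)}$; otherwise do nothing. Phase 2 ($c_1N\le k<N$): assign to each unmarked card $u$ an ordered pair $(r(u),\ell(u))$ of marked cards such that $u\mapsto(r(u),\ell(u))$ is injective and at least one of $r(u),\ell(u)$ has the same type as $u$ (possible since $c_1>1/2$). Then: (1) if $R_t=L_t=u$ is unmarked, mark $u$ with probability $a/p(u)$; (2) if $R_t=u$ is unmarked and $L_t$ is marked, with probability $a/p(L_t)$ mark $u$, and otherwise move the mark from $L_t$ to $u$ (so $L_t$ becomes unmarked and $u$ marked); (3) symmetrically if $L_t=u$ is unmarked and $R_t$ marked, with probability $a/p(R_t)$ mark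 $u$, otherwise move the mark from $R_t$ to $u$; (4) if $(R_t,L_t)=(r(u),\ell(u))$ for an unmarked $u$, mark $u$ with probability $\frac{a\,p(u)}{p(R_t)p(L_t)}$; otherwise do nothing. The scheme ends when all cards are marked; $T_k$ is the first time $k$ cards are marked. *)

theory Defs
  imports "HOL-Probability.Probability"
begin

text \<open>Cards are the natural numbers 0..<2n (N = 2n). Cards c < n are the a-cards,
  cards n \<le> c < 2n are the b-cards, with b = 2 - a.\<close>

definition cards :: "nat \<Rightarrow> nat set" where
  "cards n = {..<2*n}"

definition is_acard :: "nat \<Rightarrow> nat \<Rightarrow> bool" where
  "is_acard n c \<longleftrightarrow> c < n"

definition weight :: "real \<Rightarrow> nat \<Rightarrow> nat \<Rightarrow> real" where
  "weight a n c = (if is_acard n c then a else 2 - a)"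

definition card_pmf :: "real \<Rightarrow> nat \<Rightarrow> nat pmf" where
  "card_pmf a n = embed_pmf (\<lambda>c. if c < 2*n then weight a n c / real (2*n) else 0)"

definition valid_assignment :: "nat \<Rightarrow> nat set \<Rightarrow> (nat \<Rightarrow> nat \<times> nat) \<Rightarrow> bool" where
  "valid_assignment n M f \<longleftrightarrow>
     inj_on f (cards n - M) \<and>
     (\<forall>u \<in> cards n - M. fst (f u) \<in> M \<and> snd (f u) \<in> M \<and>
        (is_acard n (fst (f u)) = is_acard n u \<or> is_acard n (snd (f u)) = is_acard n u))"

definition mark_step_given ::
  "real \<Rightarrow> nat \<Rightarrow> real \<Rightarrow> (nat \<Rightarrow> nat \<times> nat) \<Rightarrow> nat set \<Rightarrow> nat \<Rightarrow> nat \<Rightarrow> nat set pmf" where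
  "mark_step_given a n c1 f M R L =
    (let p = weight a n; N = 2*n; k = card M in
     if k \<ge> N then return_pmf M
     else if real k < c1 * real N then
       (if R \<notin> M \<and> L \<notin> M then
          map_pmf (\<lambda>b. if b then insert R M else M) (bernoulli_pmf (a^2 / (p R * p L)))
        else return_pmf M)
     else
       (if R = L \<and> R \<notin> M then
          map_pmf (\<lambda>b. if b then insert R M else M) (bernoulli_pmf (a / p R))
        else if R \<notin> M \<and> L \<in> M then
          map_pmf (\<lambda>b. if b then insert R M else insert R (M - {L})) (bernoulli_pmf (a / p L))
        else if L \<notin> M \<and> R \<in> M then
          map_pmf (\<lambda>b. if b then insert L M else insert L (M - {R})) (bernoulli_pmf (a / p R))
        else if \<exists>u \<in> cards n - M. f u = (R, L) then
          (let u = (THE u. u \<in> cards n - M \<and> f u = (R, L)) in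
           map_pmf (\<lambda>b. if b then insert u M else M) (bernoulli_pmf (a * p u / (p R * p L))))
        else return_pmf M))"

definition mark_step ::
  "real \<Rightarrow> nat \<Rightarrow> real \<Rightarrow> (nat \<Rightarrow> nat \<times> nat) \<Rightarrow> nat set \<Rightarrow> nat set pmf" where
  "mark_step a n c1 f M =
     do { R \<leftarrow> card_pmf a n; L \<leftarrow> card_pmf a n; mark_step_given a n c1 f M R L }"

text \<open>Distribution of the marked set after t steps. The assignment may depend on
  the step index and the current marked set: asg t M is the assignment used at step t+1.\<close>
fun marked :: "real \<Rightarrow> nat \<Rightarrow> real \<Rightarrow> (nat \<Rightarrow> nat set \<Rightarrow> nat \<Rightarrow> nat \<times> nat) \<Rightarrow> nat \<Rightarrow> nat set pmf" where
  "marked a n c1 asg 0 = return_pmf {}"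
| "marked a n c1 asg (Suc t) = marked a n c1 asg t \<bind> (\<lambda>M. mark_step a n c1 (asg t M) M)"

text \<open>P(T_N > x): the scheme has not marked all N cards after floor x steps.\<close>
definition prob_TN_gt :: "real \<Rightarrow> nat \<Rightarrow> real \<Rightarrow> (nat \<Rightarrow> nat set \<Rightarrow> nat \<Rightarrow> nat \<times> nat) \<Rightarrow> real \<Rightarrow> real" where
  "prob_TN_gt a n c1 asg x =
     measure_pmf.prob (marked a n c1 asg (nat \<lfloor>x\<rfloor>)) {M. M \<noteq> cards n}"

end

theory Submission imports Defs begin

definition prc :: "real \<Rightarrow> nat \<Rightarrow> nat \<Rightarrow> real" where
  "prc a n c = weight a n c / real (2*n)"

lemma weight_pos: "0 < a \<Longrightarrow> a \<le> 1 \<Longrightarrow> a \<le> weight a n c"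
  by (simp add: weight_def)

lemma weight_le: "0 < a \<Longrightarrow> a \<le> 1 \<Longrightarrow> weight a n c \<le> 2 - a"
  by (simp add: weight_def)

lemma sum_weight: "(\<Sum>c<2*n. weight a n c) = real (2*n)"
proof -
  have "{..<2*n} = {..<n} \<union> {n..<2*n}" by auto
  hence "(\<Sum>c<2*n. weight a n c) = (\<Sum>c<n. weight a n c) + (\<Sum>c\<in>{n..<2*n}. weight a n c)"
    using sum.union_disjoint[of "{..<n}" "{n..<2*n}" "weight a n"] by (metis finite_lessThan finite_atLeastLessThan ivl_disj_int_one(2))
  also have "(\<Sum>c<n. weight a n c) = (\<Sum>c<n. a)"
    by (rule sum.cong) (auto simp: weight_def is_acard_def)
  also have "(\<Sum>c\<in>{n..<2*n}. weight a n c) = (\<Sum>c\<in>{n..<2*n}. 2 - a)"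
    by (rule sum.cong) (auto simp: weight_def is_acard_def)
  finally show ?thesis by (simp add: algebra_simps)
qed

lemma sum_pi: "n > 0 \<Longrightarrow> (\<Sum>c<2*n. prc a n c) = 1"
  unfolding prc_def by (simp add: sum_divide_distrib[symmetric] sum_weight)

lemma pmf_card_pmf:
  assumes "0 < a" "a \<le> 1" "n > 0"
  shows "pmf (card_pmf a n) c = (if c < 2*n then prc a n c else 0)"
proof -
  let ?f = "\<lambda>c. if c < 2*n then weight a n c / real (2*n) else 0"
  have nn: "\<And>c. 0 \<le> ?f c" using assms by (auto simp: weight_def)
  have "(\<integral>\<^sup>+x. ennreal (?f x) \<partial>count_space UNIV) = (\<Sum>x\<in>{..<2*n}. ennreal (?f x))"
    by (rule nn_integral_count_space') auto
  also have "\<dots> = ennreal (\<Sum>x\<in>{..<2*n}. ?f x)" using assms by (intro sum_ennreal) (auto simp: weight_def)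
  also have "(\<Sum>x\<in>{..<2*n}. ?f x) = 1" using sum_pi[OF assms(3), of a] by (simp add: prc_def)
  finally have pr: "(\<integral>\<^sup>+x. ennreal (?f x) \<partial>count_space UNIV) = 1" by simp
  show ?thesis unfolding card_pmf_def
    by (subst pmf_embed_pmf[OF nn pr]) (simp add: prc_def)
qed

lemma pi_nonneg: "0 < a \<Longrightarrow> a \<le> 1 \<Longrightarrow> 0 \<le> prc a n c"
  by (auto simp: prc_def weight_def)

lemma set_card_pmf:
  assumes "0 < a" "a \<le> 1" "n > 0"
  shows "set_pmf (card_pmf a n) \<subseteq> {..<2*n}"
  using pmf_card_pmf[OF assms] by (auto simp: set_pmf_iff split: if_splits)

lemma nn_integral_card_pmf:
  assumes "0 < a" "a \<le> 1" "n > 0"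
  shows "(\<integral>\<^sup>+x. g x \<partial>card_pmf a n) = (\<Sum>c<2*n. g c * ennreal (prc a n c))"
proof -
  have "(\<integral>\<^sup>+x. g x \<partial>card_pmf a n) = (\<Sum>c\<in>{..<2*n}. g c * pmf (card_pmf a n) c)"
    by (rule nn_integral_measure_pmf_support) (use set_card_pmf[OF assms] in auto)
  also have "\<dots> = (\<Sum>c<2*n. g c * ennreal (prc a n c))"
    by (rule sum.cong) (auto simp: pmf_card_pmf[OF assms])
  finally show ?thesis .
qed

definition phi :: "nat \<Rightarrow> real \<Rightarrow> nat \<Rightarrow> real" where
  "phi n lam c = (if is_acard n c then 1 else lam)"

definition Phi :: "nat \<Rightarrow> real \<Rightarrow> nat set \<Rightarrow> real" where
  "Phi n lam M = (\<Sum>c\<in>cards n - M. phi n lam c)"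

definition Psi :: "nat \<Rightarrow> real \<Rightarrow> real \<Rightarrow> real \<Rightarrow> nat set \<Rightarrow> real" where
  "Psi n c1 lam rho M = (if real (card M) < c1 * real (2*n) then real (2*n) * rho ^ (2*n - card M)
                         else Phi n lam M)"

lemma finite_cards[simp]: "finite (cards n)" by (simp add: cards_def)
lemma card_cards[simp]: "card (cards n) = 2*n" by (simp add: cards_def)

lemma phi_nonneg: "0 \<le> lam \<Longrightarrow> 0 \<le> phi n lam c" by (simp add: phi_def)
lemma phi_le1: "lam \<le> 1 \<Longrightarrow> phi n lam c \<le> 1" by (simp add: phi_def)
lemma phi_ge: "lam \<le> 1 \<Longrightarrow> lam \<le> phi n lam c" by (simp add: phi_def)

lemma Phi_nonneg: "0 \<le> lam \<Longrightarrow> 0 \<le> Phi n lam M"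
  unfolding Phi_def by (intro sum_nonneg phi_nonneg)

lemma Phi_le: "lam \<le> 1 \<Longrightarrow> Phi n lam M \<le> real (2*n)"
proof -
  assume l: "lam \<le> 1"
  have "Phi n lam M \<le> (\<Sum>c\<in>cards n - M. 1)" unfolding Phi_def by (intro sum_mono phi_le1 l)
  also have "\<dots> = real (card (cards n - M))" by simp
  also have "\<dots> \<le> real (card (cards n))" by (intro of_nat_mono card_mono) auto
  finally show ?thesis by simp
qed

lemma Phi_insert_le: "0 \<le> lam \<Longrightarrow> Phi n lam (insert x M) \<le> Phi n lam M"
  unfolding Phi_def by (intro sum_mono2 phi_nonneg) auto

lemma Phi_insert: "x \<in> cards n \<Longrightarrow> x \<notin> M \<Longrightarrow> Phi n lam (insert x M) = Phi n lam M - phi n lam x"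
proof -
  assume x: "x \<in> cards n" "x \<notin> M"
  have "cards n - insert x M = (cards n - M) - {x}" by auto
  thus ?thesis unfolding Phi_def using x by (simp add: sum_diff1)
qed

lemma Phi_move:
  assumes "M \<subseteq> cards n" "R \<in> cards n" "R \<notin> M" "L \<in> M"
  shows "Phi n lam (insert R (M - {L})) = Phi n lam M - phi n lam R + phi n lam L"
proof -
  have L: "L \<in> cards n" using assms by auto
  have "cards n - insert R (M - {L}) = insert L ((cards n - M) - {R})" using assms L by auto
  moreover have "L \<notin> (cards n - M) - {R}" using assms by auto
  ultimately have "Phi n lam (insert R (M - {L})) = phi n lam L + (\<Sum>c\<in>(cards n - M) - {R}. phi n lam c)"
    unfolding Phi_def by simp
  also have "(\<Sum>c\<in>(cards n - M) - {R}. phi n lam c) = Phi n lam M - phi n lam R"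
    unfolding Phi_def using assms by (simp add: sum_diff1)
  finally show ?thesis by simp
qed

lemma Phi_pos:
  assumes "M \<subseteq> cards n" "M \<noteq> cards n" "lam \<le> 1" "0 \<le> lam"
  shows "lam \<le> Phi n lam M"
proof -
  obtain c where c: "c \<in> cards n - M" using assms by auto
  have "lam \<le> phi n lam c" using assms(3) by (rule phi_ge)
  also have "\<dots> \<le> Phi n lam M" unfolding Phi_def
    using c by (intro member_le_sum phi_nonneg assms(4)) auto
  finally show ?thesis .
qed

lemma Phi_full: "Phi n lam (cards n) = 0" by (simp add: Phi_def)

lemma bern_eq:
  assumes "0 \<le> p" "p \<le> 1" "\<And>b. 0 \<le> g b"
  shows "(\<integral>\<^sup>+x. ennreal (g x) \<partial>bernoulli_pmf p) = ennreal (p * g True + (1-p) * g False)"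
proof -
  have "(\<integral>\<^sup>+x. ennreal (g x) \<partial>bernoulli_pmf p) = ennreal (g True) * ennreal p + ennreal (g False) * ennreal (1-p)"
    using assms by (subst nn_integral_bernoulli_pmf) auto
  also have "ennreal (g True) * ennreal p = ennreal (p * g True)"
    by (subst ennreal_mult) (auto simp: assms mult.commute)
  also have "ennreal (g False) * ennreal (1-p) = ennreal ((1-p) * g False)"
    by (subst ennreal_mult) (auto simp: assms mult.commute)
  also have "ennreal (p * g True) + ennreal ((1-p) * g False) = ennreal (p * g True + (1-p) * g False)"
    by (subst ennreal_plus) (auto simp: assms)
  finally show ?thesis .
qed

lemma pmf_bound:
  assumes "\<And>x. x \<in> set_pmf P \<Longrightarrow> g x \<le> B"
  shows "(\<integral>\<^sup>+x. ennreal (g x) \<partial>P) \<le> ennreal B"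
proof -
  have "(\<integral>\<^sup>+x. ennreal (g x) \<partial>P) \<le> (\<integral>\<^sup>+x. ennreal B \<partial>P)"
    by (intro nn_integral_mono_AE) (auto simp: AE_measure_pmf_iff assms ennreal_leI)
  also have "\<dots> = ennreal B" by (simp add: measure_pmf.emeasure_space_1)
  finally show ?thesis .
qed

lemma map_bern:
  assumes "0 \<le> p" "p \<le> 1" "\<And>x. 0 \<le> g x"
  shows "(\<integral>\<^sup>+x. ennreal (g x) \<partial>map_pmf (\<lambda>b. if b then A else B) (bernoulli_pmf p)) = ennreal (p * g A + (1-p) * g B)"
proof -
  have "(\<integral>\<^sup>+x. ennreal (g x) \<partial>map_pmf (\<lambda>b. if b then A else B) (bernoulli_pmf p))
      = (\<integral>\<^sup>+b. ennreal (g (if b then A else B)) \<partial>bernoulli_pmf p)" by simp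
  also have "\<dots> = ennreal (p * g A + (1-p) * g B)"
    by (subst bern_eq) (use assms in auto)
  finally show ?thesis .
qed

context
  fixes a :: real and n :: nat and c1 lam rho :: real
  assumes a0: "0 < a" and a1: "a \<le> 1" and l0: "0 \<le> lam" and l1: "lam \<le> 1"
    and c11: "c1 \<le> 1" and rho1: "1 \<le> rho" and n0: "0 < n"
begin

lemma Psi_nonneg: "0 \<le> Psi n c1 lam rho M"
  using rho1 l0 by (auto simp: Psi_def Phi_nonneg)

lemma Psi_phase2: "\<not> real (card M) < c1 * real (2*n) \<Longrightarrow> Psi n c1 lam rho M = Phi n lam M"
  by (simp add: Psi_def)

lemma Psi_phase1: "real (card M) < c1 * real (2*n) \<Longrightarrow> Psi n c1 lam rho M = real (2*n) * rho ^ (2*n - card M)"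
  by (simp add: Psi_def)

definition H2 :: "nat set \<Rightarrow> nat \<Rightarrow> nat \<Rightarrow> real" where
  "H2 M R L = (if R \<notin> M \<and> L \<in> M then Phi n lam M - phi n lam R + (1 - a / weight a n L) * phi n lam L
     else if R \<in> M \<and> L \<notin> M then Phi n lam M - phi n lam L + (1 - a / weight a n R) * phi n lam R
     else Phi n lam M)"

lemma w_pos: "0 < weight a n c" using a0 a1 by (simp add: weight_def)
lemma a_div_w: "0 \<le> a / weight a n c" "a / weight a n c \<le> 1"
  using a0 a1 w_pos[of c] weight_pos[OF a0 a1, of n c] by (auto simp: divide_le_eq_1)

lemma given_phase2:
  assumes M: "M \<subseteq> cards n" and k1: "c1 * real (2*n) \<le> real (card M)" and k2: "card M < 2*n"
    and R: "R < 2*n" and L: "L < 2*n"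
  shows "(\<integral>\<^sup>+x. ennreal (Psi n c1 lam rho x) \<partial>mark_step_given a n c1 f M R L) \<le> ennreal (H2 M R L)"
proof -
  have fin: "finite M" using M by (rule finite_subset) simp
  have nk: "\<not> 2*n \<le> card M" "\<not> real (card M) < c1 * real (2*n)" using k1 k2 by auto
  have Rc: "R \<in> cards n" and Lc: "L \<in> cards n" using R L by (auto simp: cards_def)
  have Psi_ins: "Psi n c1 lam rho (insert y M) = Phi n lam (insert y M)" for y
    by (rule Psi_phase2) (use k1 card_insert_le[of M y] in auto)
  have PsiM: "Psi n c1 lam rho M = Phi n lam M" using nk by (simp add: Psi_phase2)
  show ?thesis
  proof (cases "R \<notin> M \<and> L \<in> M")
    case True
    have RL: "R \<noteq> L" using True by auto
    have eq: "mark_step_given a n c1 f M R L = map_pmf (\<lambda>b. if b then insert R M else insert R (M - {L}))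
               (bernoulli_pmf (a / weight a n L))"
      using True nk RL by (simp add: mark_step_given_def Let_def)
    have cm: "card (insert R (M - {L})) = card M" using True fin
      by (simp add: card_insert_if) (metis Suc_pred card_gt_0_iff empty_iff)
    have P2: "Psi n c1 lam rho (insert R (M - {L})) = Phi n lam M - phi n lam R + phi n lam L"
      using nk cm Phi_move[OF M Rc _ _] True by (simp add: Psi_phase2)
    have P1: "Psi n c1 lam rho (insert R M) = Phi n lam M - phi n lam R"
      using Psi_ins Phi_insert[OF Rc] True by simp
    have val: "(a / weight a n L) * Psi n c1 lam rho (insert R M) + (1 - a / weight a n L) * Psi n c1 lam rho (insert R (M - {L})) = H2 M R L"
      unfolding P1 P2 H2_def using True by (simp add: algebra_simps)
    show ?thesis unfolding eq
      by (subst map_bern) (use a_div_w Psi_nonneg val in auto)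
  next
    case F1: False
    show ?thesis
    proof (cases "R \<in> M \<and> L \<notin> M")
      case True
      have RL: "R \<noteq> L" using True by auto
      have eq: "mark_step_given a n c1 f M R L = map_pmf (\<lambda>b. if b then insert L M else insert L (M - {R}))
                 (bernoulli_pmf (a / weight a n R))"
        using True nk RL by (simp add: mark_step_given_def Let_def)
      have cm: "card (insert L (M - {R})) = card M" using True fin
        by (simp add: card_insert_if) (metis Suc_pred card_gt_0_iff empty_iff)
      have P2: "Psi n c1 lam rho (insert L (M - {R})) = Phi n lam M - phi n lam L + phi n lam R"
        using nk cm Phi_move[OF M Lc _ _] True by (simp add: Psi_phase2)
      have P1: "Psi n c1 lam rho (insert L M) = Phi n lam M - phi n lam L"
        using Psi_ins Phi_insert[OF Lc] True by simp
      have val: "(a / weight a n R) * Psi n c1 lam rho (insert L M) + (1 - a / weight a n R) * Psi n c1 lam rho (insert L (M - {R})) = H2 M R L"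
        unfolding P1 P2 H2_def using True by (simp add: algebra_simps)
      show ?thesis unfolding eq
        by (subst map_bern) (use a_div_w Psi_nonneg val in auto)
    next
      case F2: False
      have sub: "set_pmf (mark_step_given a n c1 f M R L) \<subseteq> {M} \<union> range (\<lambda>y. insert y M)"
        using F1 F2 nk unfolding mark_step_given_def Let_def by (auto split: if_splits)
      have "(\<integral>\<^sup>+x. ennreal (Psi n c1 lam rho x) \<partial>mark_step_given a n c1 f M R L) \<le> ennreal (Phi n lam M)"
      proof (rule pmf_bound)
        fix x assume "x \<in> set_pmf (mark_step_given a n c1 f M R L)"
        with sub show "Psi n c1 lam rho x \<le> Phi n lam M"
          using PsiM Psi_ins Phi_insert_le[OF l0] by auto
      qed
      moreover have "H2 M R L = Phi n lam M" using F1 F2 unfolding H2_def by auto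
      ultimately show ?thesis by simp
    qed
  qed
qed


definition H1 :: "nat set \<Rightarrow> nat \<Rightarrow> nat \<Rightarrow> real" where
  "H1 M R L = real (2*n) * rho ^ (2*n - card M)
     - (if R \<notin> M \<and> L \<notin> M then a^2 / (weight a n R * weight a n L) *
          (real (2*n) * rho ^ (2*n - card M) - real (2*n) * rho ^ (2*n - card M - 1)) else 0)"

lemma a2_div: "0 \<le> a^2 / (weight a n R * weight a n L)" "a^2 / (weight a n R * weight a n L) \<le> 1"
proof -
  have "a * a \<le> weight a n R * weight a n L"
    using weight_pos[OF a0 a1, of n R] weight_pos[OF a0 a1, of n L] a0 by (intro mult_mono) auto
  thus "a^2 / (weight a n R * weight a n L) \<le> 1"
    using w_pos[of R] w_pos[of L] by (simp add: power2_eq_square)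
  show "0 \<le> a^2 / (weight a n R * weight a n L)"
    using w_pos[of R] w_pos[of L] by simp
qed

lemma given_phase1:
  assumes M: "M \<subseteq> cards n" and k1: "real (card M) < c1 * real (2*n)"
    and R: "R < 2*n" and L: "L < 2*n"
  shows "(\<integral>\<^sup>+x. ennreal (Psi n c1 lam rho x) \<partial>mark_step_given a n c1 f M R L) \<le> ennreal (H1 M R L)"
proof -
  have fin: "finite M" using M by (rule finite_subset) simp
  have "c1 * real (2*n) \<le> 1 * real (2*n)" by (rule mult_right_mono[OF c11]) simp
  hence kN: "card M < 2*n" using k1 by simp
  have nk: "\<not> 2*n \<le> card M" using kN by auto
  have Rc: "R \<in> cards n" using R by (auto simp: cards_def)
  have PsiM: "Psi n c1 lam rho M = real (2*n) * rho ^ (2*n - card M)" using k1 by (simp add: Psi_phase1)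
  show ?thesis
  proof (cases "R \<notin> M \<and> L \<notin> M")
    case True
    let ?p = "a^2 / (weight a n R * weight a n L)"
    have eq: "mark_step_given a n c1 f M R L = map_pmf (\<lambda>b. if b then insert R M else M) (bernoulli_pmf ?p)"
      using True nk k1 by (simp add: mark_step_given_def Let_def)
    have ci: "card (insert R M) = card M + 1" using True fin by simp
    have P1: "Psi n c1 lam rho (insert R M) \<le> real (2*n) * rho ^ (2*n - card M - 1)"
    proof (cases "real (card (insert R M)) < c1 * real (2*n)")
      case True
      thus ?thesis using ci by (simp add: Psi_phase1)
    next
      case False
      hence "Psi n c1 lam rho (insert R M) = Phi n lam (insert R M)" by (simp add: Psi_phase2)
      also have "\<dots> \<le> real (2*n)" by (rule Phi_le[OF l1])
      also have "\<dots> \<le> real (2*n) * rho ^ (2*n - card M - 1)"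
        using mult_left_mono[OF one_le_power[OF rho1, of "2*n - card M - 1"], of "real (2*n)"] by simp
      finally show ?thesis .
    qed
    have val: "?p * Psi n c1 lam rho (insert R M) + (1 - ?p) * Psi n c1 lam rho M \<le> H1 M R L"
    proof -
      have "?p * Psi n c1 lam rho (insert R M) \<le> ?p * (real (2*n) * rho ^ (2*n - card M - 1))"
        using P1 a2_div by (intro mult_left_mono) auto
      thus ?thesis unfolding PsiM H1_def using True by (simp add: algebra_simps)
    qed
    have "(\<integral>\<^sup>+x. ennreal (Psi n c1 lam rho x) \<partial>mark_step_given a n c1 f M R L)
        = ennreal (?p * Psi n c1 lam rho (insert R M) + (1 - ?p) * Psi n c1 lam rho M)"
      unfolding eq by (rule map_bern) (use a2_div Psi_nonneg in auto)
    also have "\<dots> \<le> ennreal (H1 M R L)" using val by (rule ennreal_leI)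
    finally show ?thesis .
  next
    case False
    have eq: "mark_step_given a n c1 f M R L = return_pmf M"
      using False nk k1 by (auto simp: mark_step_given_def Let_def)
    have h: "H1 M R L = real (2*n) * rho ^ (2*n - card M)" using False unfolding H1_def by auto
    show ?thesis unfolding eq using PsiM h by simp
  qed
qed

lemma H1_nonneg: "0 \<le> H1 M R L"
proof -
  define P0 where "P0 = real (2*n) * rho ^ (2*n - card M)"
  define P1 where "P1 = real (2*n) * rho ^ (2*n - card M - 1)"
  define p where "p = a^2 / (weight a n R * weight a n L)"
  have "P1 \<le> P0" unfolding P0_def P1_def
    using rho1 by (intro mult_left_mono power_increasing) auto
  moreover have "0 \<le> P1" unfolding P1_def using rho1 by simp
  moreover have "0 \<le> p" "p \<le> 1" unfolding p_def using a2_div by auto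
  ultimately have "p * (P0 - P1) \<le> P0"
    using mult_left_le_one_le[of "P0 - P1" p] by linarith
  moreover have "0 \<le> P0" using \<open>P1 \<le> P0\<close> \<open>0 \<le> P1\<close> by linarith
  ultimately show ?thesis unfolding H1_def P0_def[symmetric] P1_def[symmetric] p_def[symmetric] by auto
qed

lemma H2_nonneg: "M \<subseteq> cards n \<Longrightarrow> R < 2*n \<Longrightarrow> L < 2*n \<Longrightarrow> 0 \<le> H2 M R L"
proof -
  assume M: "M \<subseteq> cards n" and R: "R < 2*n" and L: "L < 2*n"
  have le: "c \<in> cards n - M \<Longrightarrow> phi n lam c \<le> Phi n lam M" for c
    unfolding Phi_def by (intro member_le_sum phi_nonneg l0) auto
  have pr: "0 \<le> (1 - a / weight a n c) * phi n lam c" for c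
    using a_div_w[of c] phi_nonneg[OF l0] by simp
  have Rc: "R \<in> cards n" "L \<in> cards n" using R L by (auto simp: cards_def)
  show ?thesis
  proof (cases "R \<notin> M \<and> L \<in> M")
    case True thus ?thesis unfolding H2_def using le[of R] Rc pr[of L] by auto
  next
    case F: False
    show ?thesis
    proof (cases "R \<in> M \<and> L \<notin> M")
      case True thus ?thesis unfolding H2_def using F le[of L] Rc pr[of R] by auto
    next
      case False thus ?thesis unfolding H2_def using F Phi_nonneg[OF l0, of n M] by auto
    qed
  qed
qed

lemma given_full:
  assumes M: "M \<subseteq> cards n" and k: "2*n \<le> card M"
  shows "(\<integral>\<^sup>+x. ennreal (Psi n c1 lam rho x) \<partial>mark_step_given a n c1 f M R L) \<le> 0"
proof -
  have Mc: "M = cards n" using M k by (metis card_cards card_seteq finite_cards)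
  have eq: "mark_step_given a n c1 f M R L = return_pmf M"
    using k by (simp add: mark_step_given_def Let_def)
  have "c1 * real (2*n) \<le> 1 * real (2*n)" by (rule mult_right_mono[OF c11]) simp
  hence "\<not> real (card M) < c1 * real (2*n)" using Mc by simp
  hence "Psi n c1 lam rho M = 0" using Mc by (simp add: Psi_phase2 Phi_full)
  thus ?thesis unfolding eq by simp
qed

end


lemma split_sum:
  assumes "M \<subseteq> cards n"
  shows "(\<Sum>c<2*n. f c) = (\<Sum>c\<in>cards n - M. f c) + (\<Sum>c\<in>M. f c)"
proof -
  have "(\<Sum>c\<in>cards n. f c) = (\<Sum>c\<in>cards n - M. f c) + (\<Sum>c\<in>M. f c)"
    by (rule sum.subset_diff[OF assms]) simp
  thus ?thesis by (simp add: cards_def)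
qed

lemma dsum_bound:
  fixes G :: "nat \<Rightarrow> nat \<Rightarrow> ennreal"
  assumes "\<And>R L. R < N \<Longrightarrow> L < N \<Longrightarrow> G R L \<le> ennreal (H R L)"
    and "\<And>R L. R < N \<Longrightarrow> L < N \<Longrightarrow> 0 \<le> H R L" and "\<And>c. 0 \<le> w c"
  shows "(\<Sum>R<N. (\<Sum>L<N. G R L * ennreal (w L)) * ennreal (w R))
          \<le> ennreal (\<Sum>R<N. (\<Sum>L<N. H R L * w L) * w R)"
proof -
  have "(\<Sum>R<N. (\<Sum>L<N. G R L * ennreal (w L)) * ennreal (w R))
      \<le> (\<Sum>R<N. (\<Sum>L<N. ennreal (H R L) * ennreal (w L)) * ennreal (w R))"
    by (intro sum_mono mult_right_mono) (auto intro: assms)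
  also have "\<dots> = (\<Sum>R<N. ennreal (\<Sum>L<N. H R L * w L) * ennreal (w R))"
  proof (rule sum.cong)
    fix R assume R: "R \<in> {..<N}"
    have "(\<Sum>L<N. ennreal (H R L) * ennreal (w L)) = (\<Sum>L<N. ennreal (H R L * w L))"
      by (rule sum.cong) (use R assms in \<open>auto simp: ennreal_mult\<close>)
    also have "\<dots> = ennreal (\<Sum>L<N. H R L * w L)"
      by (rule sum_ennreal) (use R assms in auto)
    finally show "(\<Sum>L<N. ennreal (H R L) * ennreal (w L)) * ennreal (w R) = ennreal (\<Sum>L<N. H R L * w L) * ennreal (w R)"
      by simp
  qed simp
  also have "\<dots> = (\<Sum>R<N. ennreal ((\<Sum>L<N. H R L * w L) * w R))"
    by (rule sum.cong) (use assms in \<open>auto simp: ennreal_mult''\<close>)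
  also have "\<dots> = ennreal (\<Sum>R<N. (\<Sum>L<N. H R L * w L) * w R)"
    by (rule sum_ennreal) (use assms in \<open>auto intro!: mult_nonneg_nonneg sum_nonneg\<close>)
  finally show ?thesis .
qed

lemma step_integral:
  assumes "0 < a" "a \<le> 1" "n > 0"
  shows "(\<integral>\<^sup>+x. g x \<partial>mark_step a n c1 f M) =
    (\<Sum>R<2*n. (\<Sum>L<2*n. (\<integral>\<^sup>+x. g x \<partial>mark_step_given a n c1 f M R L) * ennreal (prc a n L)) * ennreal (prc a n R))"
  unfolding mark_step_def by (simp add: nn_integral_card_pmf[OF assms])



lemma prc_a: "c < n \<Longrightarrow> prc a n c = a / real (2*n)"
  by (simp add: prc_def weight_def is_acard_def)
lemma prc_b: "\<not> c < n \<Longrightarrow> prc a n c = (2 - a) / real (2*n)"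
  by (simp add: prc_def weight_def is_acard_def)

lemma sum_ind:
  assumes "M \<subseteq> cards n"
  shows "(\<Sum>c<2*n. (if c \<notin> M then 1 else 0 :: real)) = real (card (cards n - M))"
proof -
  have "(\<Sum>c<2*n. (if c \<notin> M then 1 else 0 :: real)) =
        (\<Sum>c\<in>cards n - M. (if c \<notin> M then 1 else 0 :: real)) + (\<Sum>c\<in>M. (if c \<notin> M then 1 else 0 :: real))"
    by (rule split_sum[OF assms])
  also have "(\<Sum>c\<in>cards n - M. (if c \<notin> M then 1 else 0 :: real)) = (\<Sum>c\<in>cards n - M. 1)"
    by (rule sum.cong) auto
  also have "(\<Sum>c\<in>M. (if c \<notin> M then 1 else 0 :: real)) = 0"
    by (rule sum.neutral) auto
  finally show ?thesis by simp
qed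

lemma phase1_real:
  assumes a0: "0 < a" and a1: "a \<le> 1" and n0: "0 < n" and rho1: "1 \<le> rho"
    and M: "M \<subseteq> cards n" and kN: "card M < 2*n"
    and key: "g \<le> (real (card (cards n - M)))^2 * a^2 / (real (2*n))^2 * (1 - 1/rho)"
  shows "(\<Sum>R<2*n. (\<Sum>L<2*n. H1 a n rho M R L * prc a n L) * prc a n R)
         \<le> (1 - g) * (real (2*n) * rho ^ (2*n - card M))"
proof -
  define N where "N = real (2*n)"
  have N0: "0 < N" using n0 by (simp add: N_def)
  define P0 where "P0 = real (2*n) * rho ^ (2*n - card M)"
  define P1 where "P1 = real (2*n) * rho ^ (2*n - card M - 1)"
  define C where "C = a^2 / N^2 * (P0 - P1)"
  define j where "j = real (card (cards n - M))"
  have H1e: "H1 a n rho M R L = P0 - (if R \<notin> M \<and> L \<notin> M then a^2 / (weight a n R * weight a n L) * (P0 - P1) else 0)" for R L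
    using H1_def[of a 0 0 rho n M R L] a0 a1 rho1 n0 unfolding P0_def P1_def by simp
  have pt: "H1 a n rho M R L * prc a n L * prc a n R
      = P0 * prc a n L * prc a n R - (if R \<notin> M then 1 else 0) * (if L \<notin> M then 1 else 0) * C" for R L
  proof -
    have w: "weight a n R > 0" "weight a n L > 0" using a0 a1 by (auto simp: weight_def)
    have e: "a^2 / (weight a n R * weight a n L) * (P0 - P1) * (weight a n L / N) * (weight a n R / N) = a^2 / N^2 * (P0 - P1)"
      using w N0 by (simp add: field_simps power2_eq_square)
    have pp: "prc a n c = weight a n c / N" for c by (simp add: prc_def N_def)
    show ?thesis
    proof (cases "R \<notin> M \<and> L \<notin> M")
      case True
      thus ?thesis unfolding H1e C_def pp using e by (simp add: algebra_simps)
    next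
      case False
      thus ?thesis unfolding H1e C_def pp by auto
    qed
  qed
  have PP: "P0 - P1 = P0 * (1 - 1/rho)"
  proof -
    have "2*n - card M = Suc (2*n - card M - 1)" using kN by simp
    hence "P0 = rho * P1" unfolding P0_def P1_def by (metis mult.left_commute power_Suc)
    thus ?thesis using rho1 by (simp add: field_simps)
  qed
  have "(\<Sum>R<2*n. (\<Sum>L<2*n. H1 a n rho M R L * prc a n L) * prc a n R)
      = (\<Sum>R<2*n. (\<Sum>L<2*n. H1 a n rho M R L * prc a n L * prc a n R))"
    by (simp add: sum_distrib_right)
  also have "\<dots> = (\<Sum>R<2*n. (\<Sum>L<2*n. P0 * prc a n L * prc a n R - (if R \<notin> M then 1 else 0) * (if L \<notin> M then 1 else 0) * C))"
    by (simp add: pt)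
  also have "\<dots> = P0 * (\<Sum>L<2*n. prc a n L) * (\<Sum>R<2*n. prc a n R)
       - (\<Sum>R<2*n. (if R \<notin> M then 1 else 0)) * (\<Sum>L<2*n. (if L \<notin> M then 1 else 0)) * C"
    by (simp add: sum_subtractf sum_distrib_left sum_distrib_right sum_product mult.assoc mult.left_commute)
  also have "\<dots> = P0 - j * j * C"
    using sum_pi[OF n0, of a] sum_ind[OF M] by (simp add: j_def)
  also have "\<dots> = P0 - (j^2 * a^2 / N^2 * (1 - 1/rho)) * P0"
    unfolding C_def PP by (simp add: power2_eq_square)
  also have "P0 - (j^2 * a^2 / N^2 * (1 - 1/rho)) * P0 \<le> P0 - g * P0"
  proof -
    have "0 \<le> P0" unfolding P0_def using rho1 by simp
    moreover have "g \<le> j^2 * a^2 / N^2 * (1 - 1/rho)" using key by (simp add: j_def N_def)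
    ultimately have "g * P0 \<le> (j^2 * a^2 / N^2 * (1 - 1/rho)) * P0" by (rule mult_right_mono[rotated])
    thus ?thesis by linarith
  qed
  finally show ?thesis unfolding P0_def by (simp add: algebra_simps)
qed



definition E1 :: "real \<Rightarrow> nat \<Rightarrow> real \<Rightarrow> nat \<Rightarrow> nat \<Rightarrow> real" where
  "E1 a n lam u v = - phi n lam u + (1 - a / weight a n v) * phi n lam v"

lemma phase2_decomp:
  assumes a0: "0 < a" and a1: "a \<le> 1" and n0: "0 < n" and l0: "0 \<le> lam" and l1: "lam \<le> 1"
    and M: "M \<subseteq> cards n"
  shows "(\<Sum>R<2*n. (\<Sum>L<2*n. H2 a n lam M R L * prc a n L) * prc a n R)
         = Phi n lam M + 2 * (\<Sum>u\<in>cards n - M. \<Sum>v\<in>M. E1 a n lam u v * prc a n v * prc a n u)"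
proof -
  let ?p = "prc a n"
  let ?Ph = "Phi n lam M"
  define E where "E R L = (if R \<notin> M \<and> L \<in> M then E1 a n lam R L else if R \<in> M \<and> L \<notin> M then E1 a n lam L R else 0)" for R L
  define S where "S = (\<Sum>u\<in>cards n - M. \<Sum>v\<in>M. E1 a n lam u v * ?p v * ?p u)"
  have H2e: "H2 a n lam M R L = ?Ph + E R L" for R L
    using H2_def[of a lam 0 1 n M R L] a0 a1 l0 l1 n0 unfolding E_def E1_def by auto
  have "(\<Sum>R<2*n. (\<Sum>L<2*n. H2 a n lam M R L * ?p L) * ?p R)
      = (\<Sum>R<2*n. (\<Sum>L<2*n. ?Ph * ?p L * ?p R + E R L * ?p L * ?p R))"
    by (simp add: sum_distrib_right sum_distrib_left H2e algebra_simps)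
  also have "\<dots> = ?Ph * (\<Sum>L<2*n. ?p L) * (\<Sum>R<2*n. ?p R) + (\<Sum>R<2*n. (\<Sum>L<2*n. E R L * ?p L * ?p R))"
    by (simp add: sum.distrib sum_distrib_left sum_distrib_right mult.assoc)
  also have "(\<Sum>R<2*n. (\<Sum>L<2*n. E R L * ?p L * ?p R)) = 2 * S"
  proof -
    have "(\<Sum>R<2*n. (\<Sum>L<2*n. E R L * ?p L * ?p R))
        = (\<Sum>R\<in>cards n - M. (\<Sum>L<2*n. E R L * ?p L * ?p R)) + (\<Sum>R\<in>M. (\<Sum>L<2*n. E R L * ?p L * ?p R))"
      by (rule split_sum[OF M])
    also have "(\<Sum>R\<in>cards n - M. (\<Sum>L<2*n. E R L * ?p L * ?p R)) = (\<Sum>R\<in>cards n - M. (\<Sum>L\<in>M. E1 a n lam R L * ?p L * ?p R))"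
    proof (rule sum.cong)
      fix R assume R: "R \<in> cards n - M"
      have "(\<Sum>L<2*n. E R L * ?p L * ?p R) = (\<Sum>L\<in>cards n - M. E R L * ?p L * ?p R) + (\<Sum>L\<in>M. E R L * ?p L * ?p R)"
        by (rule split_sum[OF M])
      also have "(\<Sum>L\<in>cards n - M. E R L * ?p L * ?p R) = 0" by (rule sum.neutral) (use R in \<open>auto simp: E_def\<close>)
      also have "(\<Sum>L\<in>M. E R L * ?p L * ?p R) = (\<Sum>L\<in>M. E1 a n lam R L * ?p L * ?p R)"
        by (rule sum.cong) (use R in \<open>auto simp: E_def\<close>)
      finally show "(\<Sum>L<2*n. E R L * ?p L * ?p R) = (\<Sum>L\<in>M. E1 a n lam R L * ?p L * ?p R)" by simp
    qed simp
    also have "(\<Sum>R\<in>M. (\<Sum>L<2*n. E R L * ?p L * ?p R)) = (\<Sum>R\<in>M. (\<Sum>L\<in>cards n - M. E1 a n lam L R * ?p L * ?p R))"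
    proof (rule sum.cong)
      fix R assume R: "R \<in> M"
      have "(\<Sum>L<2*n. E R L * ?p L * ?p R) = (\<Sum>L\<in>cards n - M. E R L * ?p L * ?p R) + (\<Sum>L\<in>M. E R L * ?p L * ?p R)"
        by (rule split_sum[OF M])
      also have "(\<Sum>L\<in>M. E R L * ?p L * ?p R) = 0" by (rule sum.neutral) (use R in \<open>auto simp: E_def\<close>)
      also have "(\<Sum>L\<in>cards n - M. E R L * ?p L * ?p R) = (\<Sum>L\<in>cards n - M. E1 a n lam L R * ?p L * ?p R)"
        by (rule sum.cong) (use R in \<open>auto simp: E_def\<close>)
      finally show "(\<Sum>L<2*n. E R L * ?p L * ?p R) = (\<Sum>L\<in>cards n - M. E1 a n lam L R * ?p L * ?p R)" by simp
    qed simp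
    also have "\<dots> = (\<Sum>L\<in>cards n - M. (\<Sum>R\<in>M. E1 a n lam L R * ?p L * ?p R))"
      by (rule sum.swap)
    also have "\<dots> = S" unfolding S_def by (simp add: mult_ac)
    finally show ?thesis unfolding S_def by simp
  qed
  finally show ?thesis using sum_pi[OF n0, of a] by (simp add: S_def)
qed



lemma ineqA:
  fixes a d x y nn :: real
  assumes a0: "0 < a" and a1: "a \<le> 1" and d0: "0 < d" and d1: "d \<le> 1/4"
    and x: "(1-d)*nn \<le> x" and y: "(1-d)*nn \<le> y" and nn: "0 \<le> nn"
  shows "(1-d)^2 * (2*nn) \<le> a * x + (2 - a - (2-2*a)*d) * y"
proof -
  define c where "c = 2 - a - (2-2*a)*d"
  have "(2-2*a)*d \<le> (2-2*a)*(1/4)" using a1 d1 by (intro mult_left_mono) auto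
  moreover have "(2-2*a)*(1/4) \<le> 1/2" using a0 by simp
  ultimately have X: "(2-2*a)*d \<le> 1/2" by linarith
  have c0: "0 \<le> c" unfolding c_def using X a1 by linarith
  have "a * ((1-d)*nn) \<le> a * x" using x a0 by (intro mult_left_mono) auto
  moreover have "c * ((1-d)*nn) \<le> c * y" using y c0 by (intro mult_left_mono) auto
  moreover have "(2 - 2*d) * ((1-d)*nn) \<le> (a + c) * ((1-d)*nn)"
  proof (rule mult_right_mono)
    have "0 \<le> a*d" using a0 d0 by simp
    thus "2 - 2*d \<le> a + c" unfolding c_def by (simp add: algebra_simps)
    show "0 \<le> (1-d)*nn" using d1 nn by simp
  qed
  ultimately have L: "(2 - 2*d) * ((1-d)*nn) \<le> a * x + c * y" by (simp add: algebra_simps)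
  have eq: "(1-d)^2 * (2*nn) = (2 - 2*d) * ((1-d)*nn)" by (simp add: power2_eq_square algebra_simps)
  show ?thesis unfolding eq c_def[symmetric] by (rule L)
qed

lemma per_u:
  assumes a0: "0 < a" and a1: "a \<le> 1" and n0: "0 < n" and d0: "0 < d" and d1: "d \<le> 1/4"
    and M: "M \<subseteq> cards n" and k: "(1 - d/2) * real (2*n) \<le> real (card M)"
    and u: "u \<in> cards n - M"
  shows "(\<Sum>v\<in>M. E1 a n d u v * prc a n v * prc a n u) \<le> - (a * (1-d)^2 / real (2*n)) * phi n d u"
proof -
  define N where "N = real (2*n)"
  have N0: "0 < N" using n0 by (simp add: N_def)
  have fin: "finite M" using M by (rule finite_subset) simp
  define A where "A = M \<inter> {..<n}"
  define B where "B = M - {..<n}"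
  define x where "x = real (card A)"
  define y where "y = real (card B)"
  have xy: "x + y = real (card M)" unfolding x_def y_def A_def B_def
    using card_Int_Diff[OF fin, of "{..<n}"] by simp
  have xn: "x \<le> real n" unfolding x_def A_def
    using card_mono[of "{..<n}" "M \<inter> {..<n}"] by auto
  have "B \<subseteq> {n..<2*n}" unfolding B_def using M by (auto simp: cards_def)
  hence yn: "y \<le> real n" unfolding y_def using card_mono[of "{n..<2*n}" B] by auto
  have kk: "2 * real n - d * real n \<le> x + y" using k xy by (simp add: algebra_simps)
  have x1: "(1-d) * real n \<le> x" using kk yn by (simp add: algebra_simps)
  have y1: "(1-d) * real n \<le> y" using kk xn by (simp add: algebra_simps)
  have a2: "0 < 2 - a" using a1 by simp
  have sA: "(\<Sum>v\<in>A. E1 a n d u v * prc a n v * prc a n u) = x * (- phi n d u * (a / N) * prc a n u)"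
  proof -
    have "(\<Sum>v\<in>A. E1 a n d u v * prc a n v * prc a n u) = (\<Sum>v\<in>A. - phi n d u * (a / N) * prc a n u)"
      by (rule sum.cong) (use a0 in \<open>auto simp: A_def E1_def prc_a N_def weight_def is_acard_def\<close>)
    thus ?thesis by (simp add: x_def)
  qed
  have sB: "(\<Sum>v\<in>B. E1 a n d u v * prc a n v * prc a n u) = y * ((- phi n d u * (2-a) + (2 - 2*a) * d) / N * prc a n u)"
  proof -
    have e: "(- phi n d u + (1 - a / (2-a)) * d) * ((2-a) / N) = (- phi n d u * (2-a) + (2 - 2*a) * d) / N"
      using a2 N0 by (simp add: field_simps)
    have "(\<Sum>v\<in>B. E1 a n d u v * prc a n v * prc a n u) = (\<Sum>v\<in>B. (- phi n d u * (2-a) + (2 - 2*a) * d) / N * prc a n u)"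
    proof (rule sum.cong)
      fix v assume "v \<in> B"
      hence v: "\<not> v < n" by (auto simp: B_def)
      have h1: "E1 a n d u v * prc a n v = (- phi n d u + (1 - a / (2-a)) * d) * ((2-a) / N)"
        using v by (simp add: E1_def prc_b N_def weight_def is_acard_def phi_def)
      have h3: "E1 a n d u v * prc a n v = (- phi n d u * (2-a) + (2 - 2*a) * d) / N"
        using h1 e by (rule trans)
      show "E1 a n d u v * prc a n v * prc a n u = (- phi n d u * (2-a) + (2 - 2*a) * d) / N * prc a n u"
        unfolding h3 by (rule refl)
    qed simp
    thus ?thesis by (simp add: y_def)
  qed
  have split: "(\<Sum>v\<in>M. E1 a n d u v * prc a n v * prc a n u)
     = (\<Sum>v\<in>A. E1 a n d u v * prc a n v * prc a n u) + (\<Sum>v\<in>B. E1 a n d u v * prc a n v * prc a n u)"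
    unfolding A_def B_def by (rule sum.Int_Diff[OF fin])
  show ?thesis
  proof (cases "u < n")
    case True
    have pu: "prc a n u = a / N" using True by (simp add: prc_a N_def)
    have ph: "phi n d u = 1" using True by (simp add: phi_def is_acard_def)
    have val: "(\<Sum>v\<in>M. E1 a n d u v * prc a n v * prc a n u) = - (a / N / N) * (a * x + (2 - a - (2-2*a)*d) * y)"
      unfolding split sA sB using N0 by (simp add: pu ph field_simps)
    have "(1-d)^2 * (2 * real n) \<le> a * x + (2 - a - (2-2*a)*d) * y"
      by (rule ineqA[OF a0 a1 d0 d1 x1 y1]) simp
    hence "(1-d)^2 * N \<le> a * x + (2 - a - (2-2*a)*d) * y" by (simp add: N_def)
    hence "(a / N / N) * ((1-d)^2 * N) \<le> (a / N / N) * (a * x + (2 - a - (2-2*a)*d) * y)"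
      using a0 N0 by (intro mult_left_mono) auto
    moreover have "(a / N / N) * ((1-d)^2 * N) = a * (1-d)^2 / N" using N0 by (simp add: field_simps power2_eq_square)
    ultimately show ?thesis unfolding val ph N_def[symmetric] by simp
  next
    case False
    have pu: "prc a n u = (2-a) / N" using False by (simp add: prc_b N_def)
    have ph: "phi n d u = d" using False by (simp add: phi_def is_acard_def)
    have val: "(\<Sum>v\<in>M. E1 a n d u v * prc a n v * prc a n u) = - ((2-a) * d * a / N / N) * (x + y)"
      unfolding split sA sB using N0 by (simp add: pu ph field_simps)
    have th: "(1-d)^2 * N \<le> (2-a) * (x + y)"
    proof -
      have "d*d \<le> d*(3/2)" using d0 d1 by (intro mult_left_mono) auto
      hence "(1-d)^2 \<le> 1 - d/2" by (simp add: power2_eq_square algebra_simps)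
      hence "(1-d)^2 * N \<le> (1 - d/2) * N" using N0 by (intro mult_right_mono) auto
      also have "\<dots> \<le> x + y" using k xy by (simp add: N_def)
      also have "\<dots> \<le> (2-a) * (x + y)"
      proof -
        have "0 \<le> x + y" by (simp add: x_def y_def)
        hence "1 * (x + y) \<le> (2-a) * (x + y)" using a1 by (intro mult_right_mono) auto
        thus ?thesis by simp
      qed
      finally show ?thesis .
    qed
    have "(d * a / N / N) * ((1-d)^2 * N) \<le> (d * a / N / N) * ((2-a) * (x + y))"
      using a0 N0 d0 th by (intro mult_left_mono) auto
    moreover have "(d * a / N / N) * ((1-d)^2 * N) = a * (1-d)^2 / N * d" using N0 by (simp add: field_simps power2_eq_square)
    moreover have "((2-a) * d * a / N / N) * (x + y) = (d * a / N / N) * ((2-a) * (x + y))"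
      using N0 by (simp add: field_simps)
    ultimately show ?thesis unfolding val ph N_def[symmetric] by linarith
  qed
qed



definition bet :: "real \<Rightarrow> real \<Rightarrow> real" where "bet a d = 16 / (d^2 * a^2)"
definition rh :: "real \<Rightarrow> real \<Rightarrow> nat \<Rightarrow> real" where "rh a d n = 1 + bet a d / real (2*n)"
definition gam :: "real \<Rightarrow> real \<Rightarrow> nat \<Rightarrow> real" where "gam a d n = 1 - 2 * a * (1-d)^2 / real (2*n)"

lemma key1:
  fixes a d N j :: real
  assumes a0: "0 < a" and a1: "a \<le> 1" and d0: "0 < d" and d1: "d \<le> 1/4" and N0: "0 < N"
    and bN: "bet a d \<le> N" and j: "d * N / 2 \<le> j"
  shows "2 * a * (1-d)^2 / N \<le> j^2 * a^2 / N^2 * (1 - 1 / (1 + bet a d / N))"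
proof -
  define b where "b = bet a d"
  have b0: "0 < b" unfolding b_def bet_def using a0 d0 by simp
  have e1: "1 - 1 / (1 + b / N) = b / (N + b)" using N0 b0 by (simp add: field_simps)
  have "(d * N / 2)^2 \<le> j^2" using j d0 N0 by (intro power_mono) auto
  hence "(d * N / 2)^2 * a^2 / N^2 \<le> j^2 * a^2 / N^2" by (intro divide_right_mono mult_right_mono) auto
  hence j2: "d^2 * a^2 / 4 \<le> j^2 * a^2 / N^2" using N0 by (simp add: power2_eq_square field_simps)
  have "d^2 * a^2 / 4 * (b / (N + b)) = 4 / (N + b)" unfolding b_def bet_def using a0 d0
    by (simp add: field_simps power2_eq_square)
  moreover have "d^2 * a^2 / 4 * (b / (N + b)) \<le> j^2 * a^2 / N^2 * (b / (N + b))"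
    using j2 b0 N0 by (intro mult_right_mono) auto
  moreover have "2 / N \<le> 4 / (N + b)" using bN N0 b0 unfolding b_def by (simp add: field_simps)
  moreover have "2 * a * (1-d)^2 / N \<le> 2 / N"
  proof -
    have "(1-d)^2 \<le> 1" using d0 d1 by (simp add: power_le_one)
    hence "a * (1-d)^2 \<le> 1 * 1" using a0 a1 by (intro mult_mono) auto
    thus ?thesis using N0 by (simp add: divide_right_mono)
  qed
  ultimately show ?thesis unfolding e1 b_def[symmetric] by linarith
qed

lemma gam_nonneg:
  assumes a0: "0 < a" and a1: "a \<le> 1" and d0: "0 < d" and d1: "d \<le> 1/4" and n0: "0 < n" and bN: "bet a d \<le> real (2*n)"
  shows "0 \<le> gam a d n"
proof -
  have "16 \<le> bet a d"
  proof -
    have "d^2 * a^2 \<le> 1 * 1" using d0 d1 a0 a1 by (intro mult_mono power_le_one) auto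
    moreover have "0 < d^2 * a^2" using a0 d0 by simp
    ultimately show ?thesis unfolding bet_def by (simp add: field_simps)
  qed
  hence N16: "16 \<le> real (2*n)" using bN by linarith
  have "(1-d)^2 \<le> 1" using d0 d1 by (simp add: power_le_one)
  hence "a * (1-d)^2 \<le> 1 * 1" using a0 a1 by (intro mult_mono) auto
  hence "2 * a * (1-d)^2 \<le> real (2*n)" using N16 by linarith
  thus ?thesis unfolding gam_def using n0 by (simp add: field_simps)
qed

lemma step_bound:
  assumes a0: "0 < a" and a1: "a \<le> 1" and d0: "0 < d" and d1: "d \<le> 1/4" and n0: "0 < n"
    and bN: "bet a d \<le> real (2*n)" and M: "M \<subseteq> cards n"
  shows "(\<integral>\<^sup>+x. ennreal (Psi n (1 - d/2) d (rh a d n) x) \<partial>mark_step a n (1 - d/2) f M)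
         \<le> ennreal (gam a d n * Psi n (1 - d/2) d (rh a d n) M)"
proof -
  let ?c1 = "1 - d/2" and ?rho = "rh a d n"
  let ?G = "\<lambda>R L. (\<integral>\<^sup>+x. ennreal (Psi n ?c1 d ?rho x) \<partial>mark_step_given a n ?c1 f M R L)"
  have l0: "0 \<le> d" and l1: "d \<le> 1" and c11: "?c1 \<le> 1" using d0 d1 by auto
  have b0: "0 < bet a d" unfolding bet_def using a0 d0 by simp
  have rho1: "1 \<le> ?rho" unfolding rh_def using b0 by simp
  have N0: "0 < real (2*n)" using n0 by simp
  have eqI: "(\<integral>\<^sup>+x. ennreal (Psi n ?c1 d ?rho x) \<partial>mark_step a n ?c1 f M)
     = (\<Sum>R<2*n. (\<Sum>L<2*n. ?G R L * ennreal (prc a n L)) * ennreal (prc a n R))"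
    by (rule step_integral[OF a0 a1 n0])
  have pn: "\<And>c. 0 \<le> prc a n c" using pi_nonneg[OF a0 a1] by blast
  show ?thesis
  proof (cases "2*n \<le> card M")
    case True
    have "(\<Sum>R<2*n. (\<Sum>L<2*n. ?G R L * ennreal (prc a n L)) * ennreal (prc a n R))
          \<le> ennreal (\<Sum>R<2*n. (\<Sum>L<2*n. (\<lambda>R L. 0::real) R L * prc a n L) * prc a n R)"
      by (rule dsum_bound) (use given_full[OF a0 a1 l0 l1 c11 rho1 n0 M True] pn in auto)
    moreover have "(\<Sum>R<2*n. (\<Sum>L<2*n. (\<lambda>R L. 0::real) R L * prc a n L) * prc a n R) = 0" by simp
    ultimately have "(\<Sum>R<2*n. (\<Sum>L<2*n. ?G R L * ennreal (prc a n L)) * ennreal (prc a n R)) \<le> 0"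
      by (metis ennreal_0)
    thus ?thesis unfolding eqI by (rule order_trans) simp
  next
    case notfull: False
    show ?thesis
    proof (cases "real (card M) < ?c1 * real (2*n)")
      case True
      have A: "(\<Sum>R<2*n. (\<Sum>L<2*n. ?G R L * ennreal (prc a n L)) * ennreal (prc a n R))
            \<le> ennreal (\<Sum>R<2*n. (\<Sum>L<2*n. H1 a n ?rho M R L * prc a n L) * prc a n R)"
        by (rule dsum_bound) (use given_phase1[OF a0 a1 l0 l1 c11 rho1 n0 M True]
             H1_nonneg[OF a0 a1 l0 l1 c11 rho1 n0] pn in auto)
      have B: "(\<Sum>R<2*n. (\<Sum>L<2*n. H1 a n ?rho M R L * prc a n L) * prc a n R)
           \<le> (1 - 2 * a * (1-d)^2 / real (2*n)) * (real (2*n) * ?rho ^ (2*n - card M))"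
      proof (rule phase1_real[OF a0 a1 n0 rho1 M])
        show "card M < 2*n" using notfull by simp
        have cd: "card (cards n - M) = 2*n - card M" using M by (simp add: card_Diff_subset finite_subset)
        have "d * real (2*n) / 2 \<le> real (card (cards n - M))"
          using True notfull unfolding cd by (simp add: of_nat_diff algebra_simps)
        hence "2 * a * (1-d)^2 / real (2*n) \<le> (real (card (cards n - M)))^2 * a^2 / (real (2*n))^2
                * (1 - 1 / (1 + bet a d / real (2*n)))"
          by (intro key1[OF a0 a1 d0 d1 N0 bN])
        thus "2 * a * (1-d)^2 / real (2*n) \<le> (real (card (cards n - M)))^2 * a^2 / (real (2*n))^2 * (1 - 1 / ?rho)"
          unfolding rh_def .
      qed
      have C: "(1 - 2 * a * (1-d)^2 / real (2*n)) * (real (2*n) * ?rho ^ (2*n - card M)) = gam a d n * Psi n ?c1 d ?rho M"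
        unfolding gam_def using True by (simp add: Psi_def)
      show ?thesis unfolding eqI using order_trans[OF A ennreal_leI[OF B]] unfolding C .
    next
      case False
      have k1: "?c1 * real (2*n) \<le> real (card M)" using False by simp
      have k2: "card M < 2*n" using notfull by simp
      have A: "(\<Sum>R<2*n. (\<Sum>L<2*n. ?G R L * ennreal (prc a n L)) * ennreal (prc a n R))
            \<le> ennreal (\<Sum>R<2*n. (\<Sum>L<2*n. H2 a n d M R L * prc a n L) * prc a n R)"
        by (rule dsum_bound) (use given_phase2[OF a0 a1 l0 l1 c11 rho1 n0 M k1 k2]
             H2_nonneg[OF a0 a1 l0 l1 c11 rho1 n0 M] pn in auto)
      have "(\<Sum>R<2*n. (\<Sum>L<2*n. H2 a n d M R L * prc a n L) * prc a n R)
          = Phi n d M + 2 * (\<Sum>u\<in>cards n - M. \<Sum>v\<in>M. E1 a n d u v * prc a n v * prc a n u)"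
        by (rule phase2_decomp[OF a0 a1 n0 l0 l1 M])
      also have "\<dots> \<le> Phi n d M + 2 * (\<Sum>u\<in>cards n - M. - (a * (1-d)^2 / real (2*n)) * phi n d u)"
        using per_u[OF a0 a1 n0 d0 d1 M k1] by (intro add_left_mono mult_left_mono sum_mono) auto
      also have "(\<Sum>u\<in>cards n - M. - (a * (1-d)^2 / real (2*n)) * phi n d u) = - (a * (1-d)^2 / real (2*n)) * Phi n d M"
        unfolding Phi_def by (rule sum_distrib_left[symmetric])
      also have "Phi n d M + 2 * (- (a * (1-d)^2 / real (2*n)) * Phi n d M) = gam a d n * Phi n d M"
        unfolding gam_def by (simp add: algebra_simps)
      finally have B: "(\<Sum>R<2*n. (\<Sum>L<2*n. H2 a n d M R L * prc a n L) * prc a n R) \<le> gam a d n * Psi n ?c1 d ?rho M"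
        using False by (simp add: Psi_def)
      show ?thesis unfolding eqI using order_trans[OF A ennreal_leI[OF B]] .
    qed
  qed
qed

lemma THE_mem:
  assumes "valid_assignment n M f" "\<exists>u\<in>cards n - M. f u = (R, L)"
  shows "(THE u. u \<in> cards n - M \<and> f u = (R, L)) \<in> cards n"
proof -
  have inj: "inj_on f (cards n - M)" using assms(1) by (simp add: valid_assignment_def)
  obtain u where u: "u \<in> cards n - M" "f u = (R, L)" using assms(2) by auto
  have "\<exists>!u. u \<in> cards n - M \<and> f u = (R, L)"
  proof (rule ex1I[of _ u])
    show "u \<in> cards n - M \<and> f u = (R, L)" using u by simp
    fix y assume "y \<in> cards n - M \<and> f y = (R, L)"
    thus "y = u" using inj_onD[OF inj, of y u] u by auto
  qed
  from theI'[OF this] show ?thesis by auto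
qed

lemma step_support:
  assumes a0: "0 < a" and a1: "a \<le> 1" and n0: "0 < n" and M: "M \<subseteq> cards n"
    and V: "c1 * real (2*n) \<le> real (card M) \<and> card M < 2*n \<longrightarrow> valid_assignment n M f"
  shows "set_pmf (mark_step a n c1 f M) \<subseteq> {M'. M' \<subseteq> cards n}"
proof
  fix x assume x: "x \<in> set_pmf (mark_step a n c1 f M)"
  then obtain R L where R: "R \<in> set_pmf (card_pmf a n)" and L: "L \<in> set_pmf (card_pmf a n)"
    and xg: "x \<in> set_pmf (mark_step_given a n c1 f M R L)"
    unfolding mark_step_def by auto
  have Rc: "R \<in> cards n" "L \<in> cards n" using set_card_pmf[OF a0 a1 n0] R L by (auto simp: cards_def)
  show "x \<in> {M'. M' \<subseteq> cards n}"
  proof (cases "\<not> card M \<ge> 2*n \<and> \<not> real (card M) < c1 * real (2*n)")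
    case True
    hence va: "valid_assignment n M f" using V by auto
    show ?thesis using xg True Rc M THE_mem[OF va]
      unfolding mark_step_given_def Let_def by (auto split: if_splits)
  next
    case False
    show ?thesis using xg False Rc M
      unfolding mark_step_given_def Let_def by (auto split: if_splits)
  qed
qed



lemma marked_bound:
  assumes a0: "0 < a" and a1: "a \<le> 1" and d0: "0 < d" and d1: "d \<le> 1/4" and n0: "0 < n"
    and bN: "bet a d \<le> real (2*n)"
    and V: "\<forall>t M. M \<subseteq> cards n \<and> (1 - d/2) * real (2*n) \<le> real (card M) \<and> card M < 2*n
                 \<longrightarrow> valid_assignment n M (asg t M)"
  shows "set_pmf (marked a n (1 - d/2) asg t) \<subseteq> {M. M \<subseteq> cards n} \<and>
         (\<integral>\<^sup>+x. ennreal (Psi n (1 - d/2) d (rh a d n) x) \<partial>marked a n (1 - d/2) asg t)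
           \<le> ennreal (gam a d n ^ t * Psi n (1 - d/2) d (rh a d n) {})"
proof (induction t)
  case 0
  show ?case by simp
next
  case (Suc t)
  let ?c1 = "1 - d/2" and ?rho = "rh a d n"
  have l0: "0 \<le> d" and l1: "d \<le> 1" and c11: "?c1 \<le> 1" using d0 d1 by auto
  have b0: "0 < bet a d" unfolding bet_def using a0 d0 by simp
  have rho1: "1 \<le> ?rho" unfolding rh_def using b0 by simp
  have Pn: "\<And>M. 0 \<le> Psi n ?c1 d ?rho M" by (rule Psi_nonneg[OF a0 a1 l0 l1 c11 rho1 n0])
  have g0: "0 \<le> gam a d n" by (rule gam_nonneg[OF a0 a1 d0 d1 n0 bN])
  have sup: "set_pmf (marked a n ?c1 asg t) \<subseteq> {M. M \<subseteq> cards n}" using Suc.IH by blast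
  have IHi: "(\<integral>\<^sup>+x. ennreal (Psi n ?c1 d ?rho x) \<partial>marked a n ?c1 asg t) \<le> ennreal (gam a d n ^ t * Psi n ?c1 d ?rho {})"
    using Suc.IH by blast
  have S: "set_pmf (marked a n ?c1 asg (Suc t)) \<subseteq> {M. M \<subseteq> cards n}"
  proof
    fix x assume "x \<in> set_pmf (marked a n ?c1 asg (Suc t))"
    then obtain M where M: "M \<in> set_pmf (marked a n ?c1 asg t)" and x: "x \<in> set_pmf (mark_step a n ?c1 (asg t M) M)"
      by auto
    have Mc: "M \<subseteq> cards n" using M sup by auto
    show "x \<in> {M. M \<subseteq> cards n}"
      using step_support[OF a0 a1 n0 Mc, of ?c1 "asg t M"] V Mc x by auto
  qed
  have "(\<integral>\<^sup>+x. ennreal (Psi n ?c1 d ?rho x) \<partial>marked a n ?c1 asg (Suc t))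
      = (\<integral>\<^sup>+M. (\<integral>\<^sup>+x. ennreal (Psi n ?c1 d ?rho x) \<partial>mark_step a n ?c1 (asg t M) M) \<partial>marked a n ?c1 asg t)"
    by simp
  also have "\<dots> \<le> (\<integral>\<^sup>+M. ennreal (gam a d n * Psi n ?c1 d ?rho M) \<partial>marked a n ?c1 asg t)"
  proof (rule nn_integral_mono_AE)
    show "AE M in measure_pmf (marked a n ?c1 asg t).
      (\<integral>\<^sup>+x. ennreal (Psi n ?c1 d ?rho x) \<partial>mark_step a n ?c1 (asg t M) M) \<le> ennreal (gam a d n * Psi n ?c1 d ?rho M)"
      unfolding AE_measure_pmf_iff using sup step_bound[OF a0 a1 d0 d1 n0 bN] by auto
  qed
  also have "\<dots> = (\<integral>\<^sup>+M. ennreal (gam a d n) * ennreal (Psi n ?c1 d ?rho M) \<partial>marked a n ?c1 asg t)"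
    using g0 Pn by (simp add: ennreal_mult)
  also have "\<dots> = ennreal (gam a d n) * (\<integral>\<^sup>+M. ennreal (Psi n ?c1 d ?rho M) \<partial>marked a n ?c1 asg t)"
    by (rule nn_integral_cmult) simp
  also have "\<dots> \<le> ennreal (gam a d n) * ennreal (gam a d n ^ t * Psi n ?c1 d ?rho {})"
    by (rule mult_left_mono[OF IHi]) simp
  also have "\<dots> = ennreal (gam a d n ^ Suc t * Psi n ?c1 d ?rho {})"
    using g0 Pn by (simp add: ennreal_mult[symmetric] mult.assoc)
  finally show ?case using S by blast
qed

lemma prob_bound:
  assumes a0: "0 < a" and a1: "a \<le> 1" and d0: "0 < d" and d1: "d \<le> 1/4" and n0: "0 < n"
    and bN: "bet a d \<le> real (2*n)"
    and V: "\<forall>t M. M \<subseteq> cards n \<and> (1 - d/2) * real (2*n) \<le> real (card M) \<and> card M < 2*n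
                 \<longrightarrow> valid_assignment n M (asg t M)"
  shows "measure_pmf.prob (marked a n (1 - d/2) asg T) {M. M \<noteq> cards n}
          \<le> gam a d n ^ T * Psi n (1 - d/2) d (rh a d n) {} / d"
proof -
  let ?c1 = "1 - d/2" and ?rho = "rh a d n"
  let ?P = "marked a n ?c1 asg T"
  let ?A = "{M. M \<noteq> cards n}"
  have l0: "0 \<le> d" and l1: "d \<le> 1" and c11: "?c1 \<le> 1" using d0 d1 by auto
  have b0: "0 < bet a d" unfolding bet_def using a0 d0 by simp
  have rho1: "1 \<le> ?rho" unfolding rh_def using b0 by simp
  have Pn: "\<And>M. 0 \<le> Psi n ?c1 d ?rho M" by (rule Psi_nonneg[OF a0 a1 l0 l1 c11 rho1 n0])
  have g0: "0 \<le> gam a d n" by (rule gam_nonneg[OF a0 a1 d0 d1 n0 bN])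
  have MB: "set_pmf ?P \<subseteq> {M. M \<subseteq> cards n}" and IB: "(\<integral>\<^sup>+x. ennreal (Psi n ?c1 d ?rho x) \<partial>?P) \<le> ennreal (gam a d n ^ T * Psi n ?c1 d ?rho {})"
    using marked_bound[OF a0 a1 d0 d1 n0 bN V, of T] by auto
  have big: "d \<le> Psi n ?c1 d ?rho x" if "x \<subseteq> cards n" "x \<noteq> cards n" for x
  proof (cases "real (card x) < ?c1 * real (2*n)")
    case True
    have "1 \<le> ?rho ^ (2*n - card x)" by (rule one_le_power[OF rho1])
    hence "real (2*n) * 1 \<le> real (2*n) * ?rho ^ (2*n - card x)" by (intro mult_left_mono) auto
    moreover have "1 \<le> real (2*n)" using n0 by simp
    ultimately have "d \<le> real (2*n) * ?rho ^ (2*n - card x)" using l1 by linarith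
    thus ?thesis using True by (simp add: Psi_def)
  next
    case False
    thus ?thesis using Phi_pos[OF that l1 l0] by (simp add: Psi_def)
  qed
  have "emeasure ?P ?A = (\<integral>\<^sup>+x. indicator ?A x \<partial>?P)" by simp
  also have "\<dots> \<le> (\<integral>\<^sup>+x. ennreal (1/d) * ennreal (Psi n ?c1 d ?rho x) \<partial>?P)"
  proof (rule nn_integral_mono_AE)
    show "AE x in measure_pmf ?P. indicator ?A x \<le> ennreal (1/d) * ennreal (Psi n ?c1 d ?rho x)"
      unfolding AE_measure_pmf_iff
    proof
      fix x assume x: "x \<in> set_pmf ?P"
      show "indicator ?A x \<le> ennreal (1/d) * ennreal (Psi n ?c1 d ?rho x)"
      proof (cases "x = cards n")
        case True thus ?thesis by simp
      next
        case False
        have "x \<subseteq> cards n" using x MB by auto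
        hence "d \<le> Psi n ?c1 d ?rho x" using big False by auto
        hence "1 \<le> (1/d) * Psi n ?c1 d ?rho x" using d0 by (simp add: field_simps)
        hence "ennreal 1 \<le> ennreal ((1/d) * Psi n ?c1 d ?rho x)" by (rule ennreal_leI)
        moreover have "ennreal (1/d) * ennreal (Psi n ?c1 d ?rho x) = ennreal ((1/d) * Psi n ?c1 d ?rho x)"
          by (rule ennreal_mult[symmetric]) (use d0 Pn in auto)
        moreover have "indicator ?A x = (1::ennreal)" using False by simp
        ultimately show ?thesis by simp
      qed
    qed
  qed
  also have "\<dots> = ennreal (1/d) * (\<integral>\<^sup>+x. ennreal (Psi n ?c1 d ?rho x) \<partial>?P)"
    by (rule nn_integral_cmult) simp
  also have "\<dots> \<le> ennreal (1/d) * ennreal (gam a d n ^ T * Psi n ?c1 d ?rho {})"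
    by (rule mult_left_mono[OF IB]) simp
  also have "\<dots> = ennreal (gam a d n ^ T * Psi n ?c1 d ?rho {} / d)"
    using g0 Pn d0 by (simp add: ennreal_mult[symmetric])
  finally have "ennreal (measure_pmf.prob ?P ?A) \<le> ennreal (gam a d n ^ T * Psi n ?c1 d ?rho {} / d)"
    by (simp add: measure_pmf.emeasure_eq_measure)
  moreover have "0 \<le> gam a d n ^ T * Psi n ?c1 d ?rho {} / d" using g0 Pn d0 by simp
  ultimately show ?thesis by (simp add: ennreal_le_iff)
qed



lemma final_bound:
  assumes a0: "0 < a" and a1: "a \<le> 1" and d0: "0 < d" and d1: "d \<le> 1/4" and n0: "0 < n"
    and bN: "bet a d \<le> real (2*n)" and e0: "0 < \<epsilon>"
    and V: "\<forall>t M. M \<subseteq> cards n \<and> (1 - d/2) * real (2*n) \<le> real (card M) \<and> card M < 2*n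
                 \<longrightarrow> valid_assignment n M (asg t M)"
  shows "measure_pmf.prob (marked a n (1 - d/2) asg (nat \<lfloor>(1 + \<epsilon>) * (1 / (2*a)) * real (2*n) * ln (real (2*n))\<rfloor>)) {M. M \<noteq> cards n}
          \<le> exp (bet a d + 2) / d * real (2*n) powr (1 - (1-d)^2 * (1 + \<epsilon>))"
proof -
  define N where "N = real (2*n)"
  define x where "x = (1 + \<epsilon>) * (1 / (2*a)) * N * ln N"
  define T where "T = nat \<lfloor>x\<rfloor>"
  define c where "c = 2 * a * (1-d)^2"
  define s where "s = (1-d)^2 * (1 + \<epsilon>)"
  define b where "b = bet a d"
  have N1: "1 \<le> N" using n0 by (simp add: N_def)
  have N0: "0 < N" using N1 by simp
  have b0: "0 < b" unfolding b_def bet_def using a0 d0 by simp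
  have lnN: "0 \<le> ln N" using N1 by simp
  have x0: "0 \<le> x" unfolding x_def using e0 a0 N0 lnN by simp
  have Tx: "x - 1 \<le> real T" unfolding T_def using x0 by linarith
  have c0: "0 \<le> c" unfolding c_def using a0 by simp
  have c2: "c \<le> 2"
  proof -
    have "(1-d)^2 \<le> 1" using d0 d1 by (simp add: power_le_one)
    hence "a * (1-d)^2 \<le> 1 * 1" using a0 a1 by (intro mult_mono) auto
    thus ?thesis unfolding c_def by simp
  qed
  have g0: "0 \<le> gam a d n" by (rule gam_nonneg[OF a0 a1 d0 d1 n0 bN])
  have gdef: "gam a d n = 1 - c / N" unfolding gam_def c_def N_def by simp
  have P: "measure_pmf.prob (marked a n (1 - d/2) asg T) {M. M \<noteq> cards n}
          \<le> gam a d n ^ T * Psi n (1 - d/2) d (rh a d n) {} / d"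
    by (rule prob_bound[OF a0 a1 d0 d1 n0 bN V])
  have Psi0: "Psi n (1 - d/2) d (rh a d n) {} = N * (1 + b / N) ^ (2*n)"
    unfolding Psi_def rh_def N_def b_def using n0 d1 by simp
  have rhoN: "(1 + b / N) ^ (2*n) \<le> exp b"
  proof -
    have "(1 + b / N) ^ (2*n) \<le> exp (b / N) ^ (2*n)"
      using b0 N0 by (intro power_mono) auto
    also have "\<dots> = exp (real (2*n) * (b / N))" by (rule exp_of_nat_mult[symmetric])
    also have "\<dots> = exp b" using N0 by (simp add: N_def)
    finally show ?thesis .
  qed
  have gT: "gam a d n ^ T \<le> exp (2 - s * ln N)"
  proof -
    have "gam a d n ^ T \<le> exp (- (c / N)) ^ T"
      unfolding gdef using g0 gdef by (intro power_mono) (auto simp: exp_ge_add_one_self[of "- (c/N)", simplified])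
    also have "\<dots> = exp (real T * (- (c / N)))" by (rule exp_of_nat_mult[symmetric])
    also have "\<dots> \<le> exp ((x - 1) * (- (c / N)))"
    proof -
      have "0 \<le> c / N" using c0 N0 by simp
      hence "real T * (- (c / N)) \<le> (x - 1) * (- (c / N))" using Tx by (intro mult_right_mono_neg) auto
      thus ?thesis by simp
    qed
    also have "(x - 1) * (- (c / N)) = c / N - s * ln N"
      unfolding x_def c_def s_def using a0 N0 by (simp add: field_simps)
    also have "exp (c / N - s * ln N) \<le> exp (2 - s * ln N)"
    proof -
      have "c / N \<le> 2 / 1" using c2 N1 c0 by (intro frac_le) auto
      thus ?thesis by simp
    qed
    finally show ?thesis .
  qed
  have "gam a d n ^ T * Psi n (1 - d/2) d (rh a d n) {} / d \<le> exp (2 - s * ln N) * (N * exp b) / d"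
  proof -
    have "Psi n (1 - d/2) d (rh a d n) {} \<le> N * exp b" unfolding Psi0 using rhoN N0 by simp
    moreover have "0 \<le> Psi n (1 - d/2) d (rh a d n) {}" unfolding Psi0 using N0 b0 by simp
    ultimately have "gam a d n ^ T * Psi n (1 - d/2) d (rh a d n) {} \<le> exp (2 - s * ln N) * (N * exp b)"
      using gT g0 by (intro mult_mono) auto
    thus ?thesis using d0 by (simp add: divide_right_mono)
  qed
  also have "exp (2 - s * ln N) * (N * exp b) / d = exp (b + 2) / d * N powr (1 - s)"
  proof -
    have "N powr (1 - s) = exp ((1 - s) * ln N)" using N0 by (simp add: powr_def)
    also have "\<dots> = N * exp (- s * ln N)" using N0 by (simp add: algebra_simps exp_add exp_diff exp_minus field_simps)
    finally have "N powr (1 - s) = N * exp (- s * ln N)" .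
    moreover have "exp (2 - s * ln N) = exp 2 * exp (- s * ln N)" by (simp add: exp_add[symmetric])
    moreover have "exp (b + 2) = exp b * exp 2" by (simp add: exp_add)
    ultimately show ?thesis by (simp only:) (simp add: field_simps)
  qed
  finally show ?thesis using P unfolding T_def x_def N_def s_def b_def by linarith
qed



theorem mainTheorem7:
  fixes a :: real
  assumes "0 < a" and "a \<le> 1"
  shows "\<forall>\<epsilon>>0. \<exists>c1. 1/2 < c1 \<and> c1 < 1 \<and>
           (\<forall>asg :: nat \<Rightarrow> nat \<Rightarrow> nat set \<Rightarrow> nat \<Rightarrow> nat \<times> nat.
              (\<forall>n t M. M \<subseteq> cards n \<and> c1 * real (2*n) \<le> real (card M) \<and> card M < 2*n
                 \<longrightarrow> valid_assignment n M (asg n t M)) \<longrightarrow>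
              (\<lambda>n. prob_TN_gt a n c1 (asg n)
                     ((1 + \<epsilon>) * (1 / (2*a)) * real (2*n) * ln (real (2*n))))
                \<longlonglongrightarrow> 0)"
proof (intro allI impI)
  fix \<epsilon> :: real assume e0: "\<epsilon> > 0"
  have a0: "0 < a" and a1: "a \<le> 1" using assms by auto
  define d where "d = \<epsilon> / (4 * (1 + \<epsilon>))"
  have d0: "0 < d" unfolding d_def using e0 by simp
  have d1: "d \<le> 1/4" unfolding d_def using e0 by (simp add: field_simps)
  define s where "s = (1-d)^2 * (1 + \<epsilon>)"
  have s1: "1 < s"
  proof -
    have "1 - 2*d \<le> (1-d)^2" by (simp add: power2_eq_square algebra_simps)
    hence "(1 - 2*d) * (1 + \<epsilon>) \<le> s" unfolding s_def using e0 by (intro mult_right_mono) auto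
    moreover have "(1 - 2*d) * (1 + \<epsilon>) = 1 + \<epsilon>/2" unfolding d_def using e0 by (simp add: field_simps)
    ultimately show ?thesis using e0 by linarith
  qed
  show "\<exists>c1. 1/2 < c1 \<and> c1 < 1 \<and>
           (\<forall>asg :: nat \<Rightarrow> nat \<Rightarrow> nat set \<Rightarrow> nat \<Rightarrow> nat \<times> nat.
              (\<forall>n t M. M \<subseteq> cards n \<and> c1 * real (2*n) \<le> real (card M) \<and> card M < 2*n
                 \<longrightarrow> valid_assignment n M (asg n t M)) \<longrightarrow>
              (\<lambda>n. prob_TN_gt a n c1 (asg n)
                     ((1 + \<epsilon>) * (1 / (2*a)) * real (2*n) * ln (real (2*n))))
                \<longlonglongrightarrow> 0)"
  proof (intro exI[of _ "1 - d/2"] conjI allI impI)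
    show "1/2 < 1 - d/2" using d1 by simp
    show "1 - d/2 < 1" using d0 by simp
    fix asg :: "nat \<Rightarrow> nat \<Rightarrow> nat set \<Rightarrow> nat \<Rightarrow> nat \<times> nat"
    assume H: "\<forall>n t M. M \<subseteq> cards n \<and> (1 - d/2) * real (2*n) \<le> real (card M) \<and> card M < 2*n
                 \<longrightarrow> valid_assignment n M (asg n t M)"
    define C where "C = exp (bet a d + 2) / d"
    show "(\<lambda>n. prob_TN_gt a n (1 - d/2) (asg n)
                     ((1 + \<epsilon>) * (1 / (2*a)) * real (2*n) * ln (real (2*n)))) \<longlonglongrightarrow> 0"
    proof (rule tendsto_sandwich[of "\<lambda>_. 0" _ _ "\<lambda>n. C * real (2*n) powr (1 - s)"])
      show "\<forall>\<^sub>F n in sequentially. 0 \<le> prob_TN_gt a n (1 - d/2) (asg n)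
                     ((1 + \<epsilon>) * (1 / (2*a)) * real (2*n) * ln (real (2*n)))"
        by (simp add: prob_TN_gt_def)
      show "\<forall>\<^sub>F n in sequentially. prob_TN_gt a n (1 - d/2) (asg n)
                     ((1 + \<epsilon>) * (1 / (2*a)) * real (2*n) * ln (real (2*n))) \<le> C * real (2*n) powr (1 - s)"
      proof (rule eventually_sequentiallyI[of "nat \<lceil>bet a d\<rceil> + 1"])
        fix n assume n: "nat \<lceil>bet a d\<rceil> + 1 \<le> n"
        have n0: "0 < n" using n by simp
        have bN: "bet a d \<le> real (2*n)" using n by linarith
        have V: "\<forall>t M. M \<subseteq> cards n \<and> (1 - d/2) * real (2*n) \<le> real (card M) \<and> card M < 2*n
                 \<longrightarrow> valid_assignment n M (asg n t M)" using H by blast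
        show "prob_TN_gt a n (1 - d/2) (asg n)
                     ((1 + \<epsilon>) * (1 / (2*a)) * real (2*n) * ln (real (2*n))) \<le> C * real (2*n) powr (1 - s)"
          unfolding prob_TN_gt_def C_def s_def by (rule final_bound[OF a0 a1 d0 d1 n0 bN e0 V])
      qed
      show "(\<lambda>_. 0) \<longlonglongrightarrow> (0::real)" by simp
      have lim: "filterlim (\<lambda>n. real (2*n)) at_top sequentially"
        by (rule filterlim_compose[OF filterlim_real_sequentially filterlim_subseq]) (auto simp: strict_mono_def)
      have "(\<lambda>n. real (2*n) powr (1 - s)) \<longlonglongrightarrow> 0"
        by (rule tendsto_neg_powr[OF _ lim]) (use s1 in simp)
      from tendsto_mult[OF tendsto_const[of C] this] show "(\<lambda>n. C * real (2*n) powr (1 - s)) \<longlonglongrightarrow> 0"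
        by simp
    qed
  qed
qed


end
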